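(* Let $V$ be a real vector space and $X\subseteq V$. The following are equivalent: (i) $X$ is contained in a finite union of lines; (ii) $X$ contains no infinite convexly independent subset; (iii) the order-dimension of $Co(V,X)$ is finite.
   Context: A subset $Y\subseteq V$ is convexly independent if $y\notin\mathrm{conv}(Y\setminus\{y\})$ for every $y\in Y$, where $\mathrm{conv}$ denotes the convex hull. $Co(V,X)$ is the family of sets $C\cap X$, $C$ convex in $V$, ordered by inclusion. The order-dimension of a poset $P$ is the least cardinal $\lambda$ such that $P$ embeds (as a poset) into a direct product of $\lambda$ chains, equivalently the order of $P$ is the intersection of $\lambda$ linear orders. *)

theory Defs
  imports "HOL-Analysis.Analysis"
begin

definition is_line :: "'a::real_vector set \<Rightarrow> bool" where
  "is_line L \<longleftrightarrow> (\<exists>a b. a \<noteq> b \<and> L = affine hull {a, b})"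

definition convexly_independent :: "'a::real_vector set \<Rightarrow> bool" where
  "convexly_independent Y \<longleftrightarrow> (\<forall>y\<in>Y. y \<notin> convex hull (Y - {y}))"

definition Co :: "'a::real_vector set \<Rightarrow> 'a set set" where
  "Co X = {C \<inter> X | C. convex C}"

definition realizer :: "'b set \<Rightarrow> ('b \<Rightarrow> 'b \<Rightarrow> bool) \<Rightarrow> 'b rel set \<Rightarrow> bool" where
  "realizer P le R \<longleftrightarrow>
     (\<forall>r\<in>R. linear_order_on P r \<and> r \<subseteq> P \<times> P) \<and>
     (\<forall>x\<in>P. \<forall>y\<in>P. le x y \<longleftrightarrow> (\<forall>r\<in>R. (x, y) \<in> r))"

text \<open>The order-dimension (least cardinality of a realizer) is finite iff some
  finite realizer exists.\<close>
definition finite_order_dimension :: "'b set \<Rightarrow> ('b \<Rightarrow> 'b \<Rightarrow> bool) \<Rightarrow> bool" where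
  "finite_order_dimension P le \<longleftrightarrow> (\<exists>R. finite R \<and> realizer P le R)"

end

theory Submission
  imports Defs "HOL-Library.Ramsey"
begin

fun lexle :: "('b \<Rightarrow> 'c set) list \<Rightarrow> 'b \<Rightarrow> 'b \<Rightarrow> bool" where
  "lexle [] x y = True"
| "lexle (h#hs) x y = (h x \<subset> h y \<or> (h x = h y \<and> lexle hs x y))"

lemma lexle_refl: "lexle gs x x" by (induction gs) auto
lemma lexle_trans: "lexle gs x y \<Longrightarrow> lexle gs y z \<Longrightarrow> lexle gs x z"
  by (induction gs) auto
lemma lexle_total: "\<forall>h\<in>set gs. h x \<subseteq> h y \<or> h y \<subseteq> h x \<Longrightarrow> lexle gs x y \<or> lexle gs y x"
  by (induction gs) auto
lemma lexle_antisym: "lexle gs x y \<Longrightarrow> lexle gs y x \<Longrightarrow> \<forall>h\<in>set gs. h x = h y"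
  by (induction gs) auto
lemma lexle_sub: "\<forall>h\<in>set gs. h x \<subseteq> h y \<Longrightarrow> lexle gs x y"
  by (induction gs) auto

lemma lexle_linear:
  assumes chain: "\<forall>h\<in>set gs. \<forall>x\<in>P. \<forall>y\<in>P. h x \<subseteq> h y \<or> h y \<subseteq> h x"
  and antis: "\<forall>x\<in>P. \<forall>y\<in>P. (\<forall>h\<in>set gs. h x = h y) \<longrightarrow> x = y"
  shows "linear_order_on P {(x,y). x\<in>P \<and> y\<in>P \<and> lexle gs x y}"
  unfolding linear_order_on_def partial_order_on_def preorder_on_def
proof (intro conjI)
  let ?r = "{(x,y). x\<in>P \<and> y\<in>P \<and> lexle gs x y}"
  show "?r \<subseteq> P \<times> P" by blast
  show "refl_on P ?r" unfolding refl_on_def by (simp add: lexle_refl)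
  show "trans ?r"
  proof (rule transI)
    fix x y z assume "(x,y) \<in> ?r" "(y,z) \<in> ?r"
    then show "(x,z) \<in> ?r" using lexle_trans[of gs x y z] by simp
  qed
  show "antisym ?r"
  proof (rule antisymI)
    fix x y assume "(x,y) \<in> ?r" "(y,x) \<in> ?r"
    then have "x \<in> P" "y \<in> P" "\<forall>h\<in>set gs. h x = h y" using lexle_antisym[of gs x y] by auto
    then show "x = y" using antis by blast
  qed
  show "total_on P ?r" unfolding total_on_def
  proof (intro ballI impI)
    fix x y assume "x \<in> P" "y \<in> P"
    then have "lexle gs x y \<or> lexle gs y x" using chain by (intro lexle_total) blast
    then show "(x, y) \<in> ?r \<or> (y, x) \<in> ?r" using \<open>x \<in> P\<close> \<open>y \<in> P\<close> by blast
  qed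
qed

lemma realizer_from_chains:
  fixes P :: "'b set" and F :: "('b \<Rightarrow> 'c set) set"
  assumes fin: "finite F"
  and chain: "\<forall>h\<in>F. \<forall>x\<in>P. \<forall>y\<in>P. h x \<subseteq> h y \<or> h y \<subseteq> h x"
  and le: "\<forall>x\<in>P. \<forall>y\<in>P. le x y \<longleftrightarrow> (\<forall>h\<in>F. h x \<subseteq> h y)"
  and antis: "\<forall>x\<in>P. \<forall>y\<in>P. le x y \<longrightarrow> le y x \<longrightarrow> x = y"
  shows "finite_order_dimension P le"
proof -
  obtain hs where hs: "set hs = F" using finite_list[OF fin] by blast
  define rr where "rr i = {(x,y). x\<in>P \<and> y\<in>P \<and> lexle (rotate i hs) x y}" for i
  define R where "R = rr ` {..<length hs}"
  have "finite R" unfolding R_def by simp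
  moreover have "realizer P le R"
    unfolding realizer_def
  proof (intro conjI ballI)
    fix r assume "r \<in> R"
    then obtain i where r: "r = rr i" unfolding R_def by auto
    have st: "set (rotate i hs) = F" using hs by simp
    have a2: "\<forall>x\<in>P. \<forall>y\<in>P. (\<forall>h\<in>set (rotate i hs). h x = h y) \<longrightarrow> x = y"
    proof (intro ballI impI)
      fix x y assume xy: "x \<in> P" "y \<in> P" "\<forall>h\<in>set (rotate i hs). h x = h y"
      then have "le x y" "le y x" using le st by auto
      then show "x = y" using antis xy by blast
    qed
    show "linear_order_on P r" unfolding r rr_def
      by (rule lexle_linear) (use chain st a2 in auto)
  next
    fix r assume "r \<in> R"
    then show "r \<subseteq> P \<times> P" unfolding R_def rr_def by blast
  next
    fix x y assume x: "x \<in> P" and y: "y \<in> P"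
    show "le x y = (\<forall>r\<in>R. (x, y) \<in> r)"
    proof
      assume "le x y"
      then have sub: "\<forall>h\<in>F. h x \<subseteq> h y" using le x y by blast
      show "\<forall>r\<in>R. (x, y) \<in> r"
      proof
        fix r assume "r \<in> R"
        then obtain i where r: "r = rr i" unfolding R_def by blast
        have "set (rotate i hs) = F" using hs by simp
        then have "lexle (rotate i hs) x y" using sub by (intro lexle_sub) simp
        then show "(x, y) \<in> r" unfolding r rr_def using x y by simp
      qed
    next
      assume all: "\<forall>r\<in>R. (x, y) \<in> r"
      show "le x y"
      proof (rule ccontr)
        assume "\<not> le x y"
        then obtain h where h: "h \<in> F" "\<not> h x \<subseteq> h y" using le x y by blast
        then obtain i where i: "i < length hs" "hs ! i = h" using hs by (metis in_set_conv_nth)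
        have ne: "hs \<noteq> []" using i by auto
        have hy: "h y \<subset> h x" using chain h x y by blast
        have rne: "rotate i hs \<noteq> []" using ne by simp
        have "hd (rotate i hs) = h" using hd_rotate_conv_nth[OF ne, of i] i by simp
        then have rot: "rotate i hs = h # tl (rotate i hs)" using rne by (metis list.collapse)
        have "rr i \<in> R" unfolding R_def using i by blast
        then have "(x,y) \<in> rr i" using all by blast
        then have "lexle (rotate i hs) x y" unfolding rr_def by blast
        then have "lexle (h # tl (rotate i hs)) x y" using rot by metis
        then show False using hy by auto
      qed
    qed
  qed
  ultimately show ?thesis unfolding finite_order_dimension_def by blast
qed

definition par :: "'a::real_vector \<Rightarrow> 'a \<Rightarrow> 'a \<Rightarrow> real" where
  "par a b x = (THE t. x = a + t *\<^sub>R (b - a))"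

lemma aff2_param: "x \<in> affine hull {a,b} \<longleftrightarrow> (\<exists>t. x = a + t *\<^sub>R (b - a))"
proof -
  have "(\<exists>u v. x = u *\<^sub>R a + v *\<^sub>R b \<and> u + v = 1) \<longleftrightarrow> (\<exists>t. x = a + t *\<^sub>R (b - a))"
  proof
    assume "\<exists>u v. x = u *\<^sub>R a + v *\<^sub>R b \<and> u + v = 1"
    then obtain u v where "x = u *\<^sub>R a + v *\<^sub>R b" "u + v = 1" by blast
    then have "x = a + v *\<^sub>R (b - a)" by (simp add: algebra_simps flip: scaleR_add_left)
    then show "\<exists>t. x = a + t *\<^sub>R (b - a)" by blast
  next
    assume "\<exists>t. x = a + t *\<^sub>R (b - a)"
    then obtain t where "x = a + t *\<^sub>R (b - a)" by blast
    then have "x = (1 - t) *\<^sub>R a + t *\<^sub>R b \<and> (1 - t) + t = 1" by (simp add: algebra_simps)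
    then show "\<exists>u v. x = u *\<^sub>R a + v *\<^sub>R b \<and> u + v = 1" by blast
  qed
  then show ?thesis unfolding affine_hull_2 by blast
qed

lemma param_unique: fixes a b :: "'a::real_vector" assumes "a \<noteq> b" "a + t *\<^sub>R (b - a) = a + s *\<^sub>R (b - a)" shows "t = s"
proof -
  have "t *\<^sub>R (b - a) = s *\<^sub>R (b - a)" using assms(2) by (metis add_left_cancel)
  moreover have "b - a \<noteq> 0" using assms(1) by simp
  ultimately show ?thesis by (simp add: scaleR_cancel_right)
qed

lemma par_eq: assumes "a \<noteq> b" "x \<in> affine hull {a,b}"
  shows "x = a + par a b x *\<^sub>R (b - a)"
proof -
  obtain t where t: "x = a + t *\<^sub>R (b - a)" using assms aff2_param by blast
  have "par a b x = t" unfolding par_def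
    by (rule the_equality) (use t param_unique[OF assms(1)] in auto)
  then show ?thesis using t by simp
qed

lemma par_inj: assumes "a \<noteq> b" "x \<in> affine hull {a,b}" "y \<in> affine hull {a,b}"
  "par a b x = par a b y" shows "x = y"
  using par_eq[OF assms(1,2)] par_eq[OF assms(1,3)] assms(4) by metis

lemma between_in_convex:
  assumes ab: "a \<noteq> b" and C: "convex C"
  and x: "x \<in> affine hull {a,b}" and u: "u \<in> affine hull {a,b}" "u \<in> C"
  and w: "w \<in> affine hull {a,b}" "w \<in> C"
  and le: "par a b w \<le> par a b x" "par a b x \<le> par a b u"
  shows "x \<in> C"
proof (cases "par a b u = par a b w")
  case True
  then have "par a b x = par a b u" using le by simp
  then have "x = u" using par_inj[OF ab x u(1)] by simp
  then show ?thesis using u by simp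
next
  case False
  define t1 where "t1 = par a b u"
  define t2 where "t2 = par a b w"
  define t where "t = par a b x"
  have lt: "t2 < t1" using False le unfolding t1_def t2_def by simp
  define \<mu> where "\<mu> = (t - t2) / (t1 - t2)"
  have m0: "0 \<le> \<mu>" "\<mu> \<le> 1" using le lt unfolding \<mu>_def t_def t1_def t2_def
    by (auto simp: field_simps)
  have "(1 - \<mu>) *\<^sub>R w + \<mu> *\<^sub>R u \<in> C" using C u w m0 by (simp add: convex_alt)
  moreover have "(1 - \<mu>) *\<^sub>R w + \<mu> *\<^sub>R u = x"
  proof -
    have e1: "u = a + t1 *\<^sub>R (b - a)" using par_eq[OF ab u(1)] t1_def by simp
    have e2: "w = a + t2 *\<^sub>R (b - a)" using par_eq[OF ab w(1)] t2_def by simp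
    have e: "x = a + t *\<^sub>R (b - a)" using par_eq[OF ab x] t_def by simp
    have "(1 - \<mu>) *\<^sub>R w + \<mu> *\<^sub>R u = a + ((1 - \<mu>) * t2 + \<mu> * t1) *\<^sub>R (b - a)"
      unfolding e1 e2 by (simp add: algebra_simps)
    also have "(1 - \<mu>) * t2 + \<mu> * t1 = t"
    proof -
      have "\<mu> * (t1 - t2) = t - t2" unfolding \<mu>_def using lt by simp
      then show ?thesis by (simp add: algebra_simps)
    qed
    finally show ?thesis using e by simp
  qed
  ultimately show ?thesis by simp
qed

lemma is_lineE:
  assumes "is_line L" obtains a b where "a \<noteq> b" "L = affine hull {a,b}"
  using assms unfolding is_line_def by blast

lemma line_ci_finite:
  assumes L: "is_line L" and ci: "convexly_independent Y"
  shows "finite (Y \<inter> L)"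
proof (rule ccontr)
  assume inf: "infinite (Y \<inter> L)"
  obtain a b where ab: "a \<noteq> b" and Ld: "L = affine hull {a,b}" using L by (rule is_lineE)
  have main: False if "x \<in> Y \<inter> L" "s1 \<in> Y \<inter> L" "s2 \<in> Y \<inter> L" "x \<noteq> s1" "x \<noteq> s2"
     "par a b s2 \<le> par a b x" "par a b x \<le> par a b s1" for x s1 s2
  proof -
    have "x \<in> convex hull (Y - {x})"
      apply (rule between_in_convex[OF ab convex_convex_hull, where x=x and u=s1 and w=s2])
      using that Ld by (auto intro: hull_inc)
    then show False using ci that unfolding convexly_independent_def by blast
  qed
  obtain p where p: "p \<in> Y \<inter> L" using inf by (metis finite.emptyI ex_in_conv)
  have inf2: "infinite (Y \<inter> L - {p})" using inf by simp
  obtain q where q: "q \<in> Y \<inter> L - {p}" using inf2 by (metis finite.emptyI ex_in_conv)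
  have inf3: "infinite (Y \<inter> L - {p} - {q})" using inf2 by simp
  obtain r where r: "r \<in> Y \<inter> L - {p} - {q}" using inf3 by (metis finite.emptyI ex_in_conv)
  have "par a b p \<le> par a b q \<and> par a b q \<le> par a b r \<or> par a b r \<le> par a b q \<and> par a b q \<le> par a b p
     \<or> par a b q \<le> par a b p \<and> par a b p \<le> par a b r \<or> par a b r \<le> par a b p \<and> par a b p \<le> par a b q
     \<or> par a b p \<le> par a b r \<and> par a b r \<le> par a b q \<or> par a b q \<le> par a b r \<and> par a b r \<le> par a b p"
    by linarith
  then show False
    using main[of q r p] main[of q p r] main[of p r q] main[of p q r] main[of r q p] main[of r p q] p q r
    by auto
qed

lemma lines_ci_finite:
  assumes "finite \<L>" "\<forall>L\<in>\<L>. is_line L" "Y \<subseteq> \<Union>\<L>" "convexly_independent Y"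
  shows "finite Y"
proof -
  have "Y = (\<Union>L\<in>\<L>. Y \<inter> L)" using assms(3) by blast
  moreover have "finite (\<Union>L\<in>\<L>. Y \<inter> L)" using assms line_ci_finite by (intro finite_UN_I) auto
  ultimately show ?thesis by simp
qed

lemma fod_imp_no_inf_ci:
  assumes fod: "finite_order_dimension (Co X) (\<subseteq>)"
  and Y: "Y \<subseteq> X" "convexly_independent Y"
  shows "finite Y"
proof -
  obtain R where R: "finite R" "realizer (Co X) (\<subseteq>) R"
    using fod unfolding finite_order_dimension_def by blast
  define S where "S y = {y}" for y :: 'a
  define B where "B y = convex hull (Y - {y}) \<inter> X" for y
  have SC: "S y \<in> Co X" if "y \<in> Y" for y
  proof -
    have "S y = {y} \<inter> X" using that Y unfolding S_def by auto
    then show ?thesis unfolding Co_def by (auto intro: convex_singleton)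
  qed
  have BC: "B y \<in> Co X" for y unfolding Co_def B_def by auto
  have yS: "y \<in> S y" for y unfolding S_def by simp
  have yB: "y \<notin> B y" if "y \<in> Y" for y using Y that unfolding B_def convexly_independent_def by auto
  have SB: "S y \<subseteq> B z" if "y \<in> Y" "z \<in> Y" "y \<noteq> z" for y z
    using that Y unfolding S_def B_def by (auto intro: hull_inc)
  have lin: "\<forall>r\<in>R. linear_order_on (Co X) r" and iff: "\<forall>x\<in>Co X. \<forall>y\<in>Co X. x \<subseteq> y \<longleftrightarrow> (\<forall>r\<in>R. (x, y) \<in> r)"
    using R(2) unfolding realizer_def by auto
  have "\<exists>r\<in>R. (S y, B y) \<notin> r" if "y \<in> Y" for y
    using iff SC[OF that] BC yS yB[OF that] by blast
  then obtain rf where rf: "\<And>y. y \<in> Y \<Longrightarrow> rf y \<in> R \<and> (S y, B y) \<notin> rf y" by metis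
  have rev: "(B y, S y) \<in> rf y" if "y \<in> Y" for y
  proof -
    have "total_on (Co X) (rf y)" using lin rf[OF that] unfolding linear_order_on_def by auto
    moreover have "S y \<noteq> B y" using yS yB that by auto
    ultimately show ?thesis using rf[OF that] SC[OF that] BC unfolding total_on_def by blast
  qed
  have "inj_on rf Y"
  proof (rule inj_onI)
    fix y z assume yz: "y \<in> Y" "z \<in> Y" "rf y = rf z"
    show "y = z"
    proof (rule ccontr)
      assume ne: "y \<noteq> z"
      define r where "r = rf y"
      have tr: "trans r" using lin rf[OF yz(1)] unfolding r_def linear_order_on_def partial_order_on_def preorder_on_def by auto
      have "r \<in> R" using rf[OF yz(1)] r_def by simp
      then have 1: "(S y, B z) \<in> r" using iff SB[OF yz(1,2) ne] SC[OF yz(1)] BC by blast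
      have 2: "(B z, S z) \<in> r" using rev[OF yz(2)] yz(3) r_def by simp
      have 3: "(S z, B y) \<in> r" using iff SB[OF yz(2,1)] ne SC[OF yz(2)] BC \<open>r \<in> R\<close> by blast
      have "(S y, B y) \<in> r" using 1 2 3 tr by (meson transD)
      then show False using rf[OF yz(1)] r_def by simp
    qed
  qed
  then show "finite Y" using R(1) rf by (metis finite_subset image_subsetI inj_on_finite)
qed

lemma chain_down:
  fixes q :: "'a \<Rightarrow> real"
  shows "{x\<in>Z. \<exists>s\<in>A. q x \<le> q s} \<subseteq> {x\<in>Z. \<exists>s\<in>B. q x \<le> q s} \<or> {x\<in>Z. \<exists>s\<in>B. q x \<le> q s} \<subseteq> {x\<in>Z. \<exists>s\<in>A. q x \<le> q s}"
proof (rule ccontr)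
  assume "\<not> ?thesis"
  then obtain x y where x: "x \<in> Z" "\<exists>s\<in>A. q x \<le> q s" "\<not> (\<exists>s\<in>B. q x \<le> q s)"
    and y: "y \<in> Z" "\<exists>s\<in>B. q y \<le> q s" "\<not> (\<exists>s\<in>A. q y \<le> q s)" by blast
  obtain s1 where "s1 \<in> A" "q x \<le> q s1" using x by auto
  obtain s2 where "s2 \<in> B" "q y \<le> q s2" using y by auto
  have "q s2 < q x" "q s1 < q y" using x y \<open>s1\<in>A\<close> \<open>s2\<in>B\<close> by (auto simp: not_le)
  then show False using \<open>q x \<le> q s1\<close> \<open>q y \<le> q s2\<close> by linarith
qed

lemma chain_up:
  fixes q :: "'a \<Rightarrow> real"
  shows "{x\<in>Z. \<exists>s\<in>A. q s \<le> q x} \<subseteq> {x\<in>Z. \<exists>s\<in>B. q s \<le> q x} \<or> {x\<in>Z. \<exists>s\<in>B. q s \<le> q x} \<subseteq> {x\<in>Z. \<exists>s\<in>A. q s \<le> q x}"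
  using chain_down[of Z A "\<lambda>x. - q x" B] by simp

lemma lines_imp_fod:
  fixes X :: "'a::real_vector set"
  assumes fin: "finite \<L>" and lines: "\<forall>L\<in>\<L>. is_line L" and cov: "X \<subseteq> \<Union>\<L>"
  shows "finite_order_dimension (Co X) (\<subseteq>)"
proof -
  have ex: "\<forall>L\<in>\<L>. \<exists>ab. fst ab \<noteq> snd ab \<and> L = affine hull {fst ab, snd ab}"
  proof
    fix L assume "L \<in> \<L>"
    then obtain a b where "a \<noteq> b" "L = affine hull {a,b}" using lines is_lineE by metis
    then show "\<exists>ab. fst ab \<noteq> snd ab \<and> L = affine hull {fst ab, snd ab}"
      by (intro exI[of _ "(a,b)"]) simp
  qed
  obtain e where e0: "\<forall>L\<in>\<L>. fst (e L) \<noteq> snd (e L) \<and> L = affine hull {fst (e L), snd (e L)}"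
    using bchoice[OF ex] by blast
  have e: "\<And>L. L\<in>\<L> \<Longrightarrow> fst (e L) \<noteq> snd (e L) \<and> L = affine hull {fst (e L), snd (e L)}"
    using e0 by blast
  define p where "p L = par (fst (e L)) (snd (e L))" for L
  define Dn where "Dn L A = {x \<in> X \<inter> L. \<exists>s\<in>A \<inter> L. p L x \<le> p L s}" for L A
  define Up where "Up L A = {x \<in> X \<inter> L. \<exists>s\<in>A \<inter> L. p L s \<le> p L x}" for L A
  define F where "F = (\<lambda>L. Dn L) ` \<L> \<union> (\<lambda>L. Up L) ` \<L>"
  show ?thesis
  proof (rule realizer_from_chains[where F=F])
    show "finite F" unfolding F_def using fin by simp
    show "\<forall>h\<in>F. \<forall>x\<in>Co X. \<forall>y\<in>Co X. h x \<subseteq> h y \<or> h y \<subseteq> h x"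
    proof (intro ballI)
      fix h and A B :: "'a set" assume "h \<in> F" "A \<in> Co X" "B \<in> Co X"
      then obtain L where "h = Dn L \<or> h = Up L" unfolding F_def by blast
      then show "h A \<subseteq> h B \<or> h B \<subseteq> h A"
      proof
        assume "h = Dn L" then show ?thesis unfolding Dn_def
          using chain_down[of "X \<inter> L" "A \<inter> L" "p L" "B \<inter> L"] by simp
      next
        assume "h = Up L" then show ?thesis unfolding Up_def
          using chain_up[of "X \<inter> L" "A \<inter> L" "p L" "B \<inter> L"] by simp
      qed
    qed
    show "\<forall>x\<in>Co X. \<forall>y\<in>Co X. x \<subseteq> y \<longrightarrow> y \<subseteq> x \<longrightarrow> x = y" by blast
    show "\<forall>A\<in>Co X. \<forall>B\<in>Co X. A \<subseteq> B \<longleftrightarrow> (\<forall>h\<in>F. h A \<subseteq> h B)"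
    proof (intro ballI)
      fix A B :: "'a set" assume A: "A \<in> Co X" and B: "B \<in> Co X"
      show "A \<subseteq> B \<longleftrightarrow> (\<forall>h\<in>F. h A \<subseteq> h B)"
      proof
      assume "A \<subseteq> B"
      show "\<forall>h\<in>F. h A \<subseteq> h B"
      proof
        fix h assume "h \<in> F"
        then obtain L where "h = Dn L \<or> h = Up L" unfolding F_def by blast
        then show "h A \<subseteq> h B" unfolding Dn_def Up_def using \<open>A \<subseteq> B\<close> by blast
      qed
    next
      assume all: "\<forall>h\<in>F. h A \<subseteq> h B"
      obtain C where C: "convex C" "B = C \<inter> X" using B unfolding Co_def by blast
      have AX: "A \<subseteq> X" using A unfolding Co_def by blast
      show "A \<subseteq> B"
      proof
        fix x assume xA: "x \<in> A"
        then have xX: "x \<in> X" using AX by blast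
        then obtain L where L: "L \<in> \<L>" "x \<in> L" using cov by blast
        have "x \<in> Dn L A" "x \<in> Up L A" unfolding Dn_def Up_def using xA xX L by auto
        moreover have "Dn L \<in> F" "Up L \<in> F" unfolding F_def using L by auto
        ultimately have "x \<in> Dn L B" "x \<in> Up L B" using all by blast+
        then obtain s1 s2 where s: "s1 \<in> B \<inter> L" "p L x \<le> p L s1" "s2 \<in> B \<inter> L" "p L s2 \<le> p L x"
          unfolding Dn_def Up_def by blast
        have eL: "fst (e L) \<noteq> snd (e L)" "L = affine hull {fst (e L), snd (e L)}" using e[OF L(1)] by auto
        have "x \<in> C"
          apply (rule between_in_convex[where x=x and u=s1 and w=s2 and C=C and a="fst (e L)" and b="snd (e L)"])
          using eL C s L unfolding p_def by blast+
        then show "x \<in> B" using C xX by blast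
      qed
    qed
    qed
  qed
qed

definition orient :: "('a \<Rightarrow> real) \<Rightarrow> ('a \<Rightarrow> real) \<Rightarrow> 'a \<Rightarrow> 'a \<Rightarrow> 'a \<Rightarrow> real" where
  "orient f g p q r = (f q - f p) * (g r - g p) - (f r - f p) * (g q - g p)"

lemma convex_halfplane:
  fixes f g :: "'a::real_vector \<Rightarrow> real"
  assumes lf: "linear f" and lg: "linear g"
  shows "convex {v. 0 < \<alpha> * g v - \<beta> * f v + \<gamma>}"
  unfolding convex_def
proof (intro ballI allI impI)
  fix x y and u v :: real
  assume x: "x \<in> {v. 0 < \<alpha> * g v - \<beta> * f v + \<gamma>}" and y: "y \<in> {v. 0 < \<alpha> * g v - \<beta> * f v + \<gamma>}"
    and u0: "0 \<le> u" and v0: "0 \<le> v" and uv1: "u + v = 1"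
  have hx: "0 < \<alpha> * g x - \<beta> * f x + \<gamma>" and hy: "0 < \<alpha> * g y - \<beta> * f y + \<gamma>" using x y by auto
  have eq: "\<alpha> * g (u *\<^sub>R x + v *\<^sub>R y) - \<beta> * f (u *\<^sub>R x + v *\<^sub>R y) + \<gamma>
      = u * (\<alpha> * g x - \<beta> * f x + \<gamma>) + v * (\<alpha> * g y - \<beta> * f y + \<gamma>)"
  proof -
    have "g (u *\<^sub>R x + v *\<^sub>R y) = u * g x + v * g y" using lg by (simp add: linear_add linear_scale)
    moreover have "f (u *\<^sub>R x + v *\<^sub>R y) = u * f x + v * f y" using lf by (simp add: linear_add linear_scale)
    moreover have "\<gamma> = u * \<gamma> + v * \<gamma>" using uv1 by (metis distrib_right mult_1)
    ultimately show ?thesis by (simp add: algebra_simps)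
  qed
  have "0 < u * (\<alpha> * g x - \<beta> * f x + \<gamma>) + v * (\<alpha> * g y - \<beta> * f y + \<gamma>)"
  proof (cases "u = 0")
    case True then have "v = 1" using uv1 by simp
    then show ?thesis using True hy by simp
  next
    case False then have "0 < u" using u0 by simp
    then have "0 < u * (\<alpha> * g x - \<beta> * f x + \<gamma>)" using hx by simp
    moreover have "0 \<le> v * (\<alpha> * g y - \<beta> * f y + \<gamma>)" using hy v0 by simp
    ultimately show ?thesis by linarith
  qed
  then show "u *\<^sub>R x + v *\<^sub>R y \<in> {v. 0 < \<alpha> * g v - \<beta> * f v + \<gamma>}" using eq by simp
qed

lemma planar:
  fixes f g :: "'a::real_vector \<Rightarrow> real" and x :: "nat \<Rightarrow> 'a"
  assumes lf: "linear f" and lg: "linear g" and inj: "inj_on x T" and T: "infinite T"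
  and pos: "\<forall>a\<in>T. \<forall>b\<in>T. \<forall>c\<in>T. a < b \<longrightarrow> b < c \<longrightarrow> 0 < orient f g (x a) (x b) (x c)"
  shows "\<exists>Y \<subseteq> x ` T. infinite Y \<and> convexly_independent Y"
proof -
  define m0 where "m0 = (LEAST k. k \<in> T)"
  have "T \<noteq> {}" using T by auto
  then have m0T: "m0 \<in> T" unfolding m0_def by (metis LeastI ex_in_conv)
  have m0le: "\<And>k. k \<in> T \<Longrightarrow> m0 \<le> k" unfolding m0_def by (rule Least_le)
  define T' where "T' = T - {m0}"
  define Y where "Y = x ` T'"
  have "infinite T'" using T unfolding T'_def by simp
  moreover have "inj_on x T'" using inj unfolding T'_def by (rule inj_on_subset) blast
  ultimately have infY: "infinite Y" unfolding Y_def using finite_imageD by blast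
  have "convexly_independent Y" unfolding convexly_independent_def
  proof
    fix y assume "y \<in> Y"
    then obtain b where b: "b \<in> T'" "y = x b" unfolding Y_def by blast
    have bT: "b \<in> T" and bm: "m0 < b" using b m0le unfolding T'_def by (auto simp: le_less)
    define A where "A = {k \<in> T. k < b}"
    have finA: "finite A" unfolding A_def by (rule finite_subset[of _ "{..<b}"]) auto
    have neA: "A \<noteq> {}" using m0T bm unfolding A_def by blast
    define a where "a = Max A"
    have aA: "a \<in> A" unfolding a_def using finA neA by (rule Max_in)
    then have aT: "a \<in> T" and ab: "a < b" unfolding A_def by auto
    have amax: "\<And>k. k \<in> T \<Longrightarrow> k < b \<Longrightarrow> k \<le> a" unfolding a_def using finA A_def by auto
    have "\<exists>k. k \<in> T \<and> b < k" using T unfolding infinite_nat_iff_unbounded by blast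
    define c where "c = (LEAST k. k \<in> T \<and> b < k)"
    have cT: "c \<in> T" and bc: "b < c" unfolding c_def using LeastI_ex[OF \<open>\<exists>k. k \<in> T \<and> b < k\<close>] by auto
    have cmin: "\<And>k. k \<in> T \<Longrightarrow> b < k \<Longrightarrow> c \<le> k" unfolding c_def by (rule Least_le) simp
    define Or where "Or = orient f g"
    define H where "H v = (f (x c) - f (x a)) * (g v - g (x b)) - (f v - f (x b)) * (g (x c) - g (x a))" for v
    have Hid: "H v = Or (x a) (x c) v + Or (x a) (x b) (x c)" for v
      unfolding H_def Or_def orient_def by (simp add: algebra_simps)
    have Oabc: "0 < Or (x a) (x b) (x c)" using pos aT bT cT ab bc unfolding Or_def by blast
    have Hpos: "0 < H (x k)" if kT: "k \<in> T" and kb: "k \<noteq> b" for k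
    proof (cases "k < b")
      case True
      then have "k \<le> a" using amax kT by blast
      then show ?thesis
      proof (cases "k = a")
        case True
        have "Or (x a) (x c) (x k) = 0" unfolding True Or_def orient_def by simp
        then show ?thesis using Hid Oabc by simp
      next
        case False
        then have "k < a" using \<open>k \<le> a\<close> by simp
        then have "0 < Or (x k) (x a) (x c)" using pos kT aT cT ab bc unfolding Or_def by auto
        moreover have "Or (x a) (x c) (x k) = Or (x k) (x a) (x c)" unfolding Or_def orient_def by (simp add: algebra_simps)
        ultimately show ?thesis using Hid Oabc by simp
      qed
    next
      case False
      then have "b < k" using kb by simp
      then have "c \<le> k" using cmin kT by blast
      then show ?thesis
      proof (cases "k = c")
        case True
        have "Or (x a) (x c) (x k) = 0" unfolding True Or_def orient_def by simp
        then show ?thesis using Hid Oabc by simp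
      next
        case False
        then have "c < k" using \<open>c \<le> k\<close> by simp
        then have "0 < Or (x a) (x c) (x k)" using pos kT aT cT ab bc unfolding Or_def by auto
        then show ?thesis using Hid Oabc by simp
      qed
    qed
    define S where "S = {v. 0 < H v}"
    have "S = {v. 0 < (f (x c) - f (x a)) * g v - (g (x c) - g (x a)) * f v +
                   ((g (x c) - g (x a)) * f (x b) - (f (x c) - f (x a)) * g (x b))}"
      unfolding S_def H_def by (simp add: algebra_simps)
    then have cS: "convex S" using convex_halfplane[OF lf lg] by simp
    have "Y - {y} \<subseteq> S"
    proof
      fix v assume "v \<in> Y - {y}"
      then obtain k where k: "k \<in> T'" "v = x k" "x k \<noteq> x b" unfolding Y_def using b by auto
      then have "k \<noteq> b" by auto
      then show "v \<in> S" unfolding S_def using Hpos k unfolding T'_def by auto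
    qed
    then have "convex hull (Y - {y}) \<subseteq> S" using cS by (simp add: hull_minimal)
    moreover have "y \<notin> S" unfolding S_def H_def b by simp
    ultimately show "y \<notin> convex hull (Y - {y})" by blast
  qed
  moreover have "Y \<subseteq> x ` T" unfolding Y_def T'_def by blast
  ultimately show ?thesis using infY by blast
qed

lemma ramsey3:
  fixes T0 :: "nat set" and \<phi> :: "nat \<Rightarrow> nat \<Rightarrow> nat \<Rightarrow> nat"
  assumes T0: "infinite T0" and bd: "\<forall>a b c. \<phi> a b c < k"
  shows "\<exists>T \<subseteq> T0. infinite T \<and> (\<exists>t. \<forall>a\<in>T. \<forall>b\<in>T. \<forall>c\<in>T. a < b \<longrightarrow> b < c \<longrightarrow> \<phi> a b c = t)"
proof -
  define col where "col X = (let l = sorted_list_of_set X in \<phi> (l!0) (l!1) (l!2))" for X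
  have "\<forall>X. X \<subseteq> T0 \<and> finite X \<and> card X = 3 \<longrightarrow> col X < k"
    unfolding col_def using bd by (simp add: Let_def)
  from Ramsey[OF T0 this] obtain Y t where Y: "Y \<subseteq> T0" "infinite Y" "t < k"
    "\<forall>X. X \<subseteq> Y \<and> finite X \<and> card X = 3 \<longrightarrow> col X = t" by auto
  have "\<forall>a\<in>Y. \<forall>b\<in>Y. \<forall>c\<in>Y. a < b \<longrightarrow> b < c \<longrightarrow> \<phi> a b c = t"
  proof (intro ballI impI)
    fix a b c assume abc: "a \<in> Y" "b \<in> Y" "c \<in> Y" "a < b" "b < c"
    have "card {a,b,c} = 3" using abc by simp
    moreover have "{a,b,c} \<subseteq> Y" using abc by simp
    ultimately have "col {a,b,c} = t" using Y(4) by simp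
    moreover have "sorted_list_of_set {a,b,c} = [a,b,c]" using abc by simp
    ultimately show "\<phi> a b c = t" unfolding col_def by simp
  qed
  then have H: "\<exists>t'. \<forall>a\<in>Y. \<forall>b\<in>Y. \<forall>c\<in>Y. a < b \<longrightarrow> b < c \<longrightarrow> \<phi> a b c = t'"
    by (rule exI)
  show ?thesis
  proof (rule exI[of _ Y], intro conjI)
    show "Y \<subseteq> T0" by (rule Y(1))
    show "infinite Y" by (rule Y(2))
    show "\<exists>t. \<forall>a\<in>Y. \<forall>b\<in>Y. \<forall>c\<in>Y. a < b \<longrightarrow> b < c \<longrightarrow> \<phi> a b c = t" by (rule H)
  qed
qed

lemma ramsey_fin:
  fixes \<Phi> :: "(nat \<Rightarrow> nat \<Rightarrow> nat \<Rightarrow> nat) set"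
  assumes fin: "finite \<Phi>" and bd: "\<forall>\<phi>\<in>\<Phi>. \<forall>a b c. \<phi> a b c < k" and T0: "infinite T0"
  shows "\<exists>T \<subseteq> T0. infinite T \<and> (\<forall>\<phi>\<in>\<Phi>. \<exists>t. \<forall>a\<in>T. \<forall>b\<in>T. \<forall>c\<in>T. a < b \<longrightarrow> b < c \<longrightarrow> \<phi> a b c = t)"
proof -
  define hom where "hom T \<phi> = (\<exists>t. \<forall>a\<in>T. \<forall>b\<in>T. \<forall>c\<in>T. a < b \<longrightarrow> b < c \<longrightarrow> \<phi> a b c = t)"
    for T :: "nat set" and \<phi> :: "nat \<Rightarrow> nat \<Rightarrow> nat \<Rightarrow> nat"
  have mono: "hom T' \<phi>" if hT: "hom T \<phi>" and sT: "T' \<subseteq> T" for T T' \<phi>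
  proof -
    obtain t where t: "\<forall>a\<in>T. \<forall>b\<in>T. \<forall>c\<in>T. a < b \<longrightarrow> b < c \<longrightarrow> \<phi> a b c = t"
      using hT unfolding hom_def by auto
    have "\<forall>a\<in>T'. \<forall>b\<in>T'. \<forall>c\<in>T'. a < b \<longrightarrow> b < c \<longrightarrow> \<phi> a b c = t"
      using sT t by (simp add: subset_iff)
    then show ?thesis unfolding hom_def by (rule exI)
  qed
  have main: "\<exists>T \<subseteq> S. infinite T \<and> (\<forall>\<phi>\<in>\<Psi>. hom T \<phi>)"
    if "finite \<Psi>" "\<Psi> \<subseteq> \<Phi>" "infinite S" for \<Psi> S
    using that
  proof (induction \<Psi> arbitrary: S rule: finite_induct)
    case empty
    then show ?case by blast
  next
    case (insert \<phi> \<Psi>)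
    have sub: "\<Psi> \<subseteq> \<Phi>" using insert.prems(1) by blast
    obtain T1 where T1: "T1 \<subseteq> S" "infinite T1" "\<forall>\<psi>\<in>\<Psi>. hom T1 \<psi>"
      using insert.IH[OF sub insert.prems(2)] by blast
    have "\<phi> \<in> \<Phi>" using insert.prems(1) by blast
    then have "\<forall>a b c. \<phi> a b c < k" using bd by blast
    from ramsey3[OF T1(2) this] obtain T2 where T2: "T2 \<subseteq> T1" "infinite T2" "hom T2 \<phi>"
      unfolding hom_def by auto
    have "\<forall>\<psi>\<in>\<Psi>. hom T2 \<psi>"
    proof
      fix \<psi> assume "\<psi> \<in> \<Psi>"
      then have "hom T1 \<psi>" using T1(3) by blast
      then show "hom T2 \<psi>" using mono T2(1) by blast
    qed
    then have "\<forall>\<psi>\<in>insert \<phi> \<Psi>. hom T2 \<psi>" using T2(3) by blast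
    moreover have "T2 \<subseteq> S" using T1(1) T2(1) by blast
    ultimately show ?case using T2(2) by blast
  qed
  have "\<exists>T \<subseteq> T0. infinite T \<and> (\<forall>\<phi>\<in>\<Phi>. hom T \<phi>)"
    using main[OF fin order_refl T0] .
  then show ?thesis unfolding hom_def .
qed

lemma orient_swap: "orient g f p q r = - orient f g p q r"
  unfolding orient_def by (simp add: algebra_simps)

lemma core_fin:
  fixes x :: "nat \<Rightarrow> 'a::real_vector"
  assumes inj: "inj x" and nc: "\<forall>a b c. a < b \<longrightarrow> b < c \<longrightarrow> x c \<notin> affine hull {x a, x b}"
  and fd: "\<forall>m. x m - x 0 \<in> span ((\<lambda>k. x k - x 0) ` {..<N})"
  shows "\<exists>Y \<subseteq> range x. infinite Y \<and> convexly_independent Y"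
proof -
  define z where "z k = x k - x 0" for k
  define V where "V = z ` {..<N}"
  obtain B where B: "B \<subseteq> V" "independent B" "V \<subseteq> span B" "card B = dim V" by (rule basis_exists)
  have finB: "finite B" using B(1) unfolding V_def by (rule finite_subset) simp
  have zB: "z m \<in> span B" for m
  proof -
    have "z m \<in> span V" using fd unfolding z_def V_def by simp
    moreover have "span V \<subseteq> span B" using span_mono[OF B(3)] by (simp add: span_span)
    ultimately show ?thesis by blast
  qed
  have "\<forall>b\<in>B. \<exists>g. linear g \<and> (\<forall>y\<in>B. g y = (if y = b then 1 else (0::real)))"
  proof
    fix b assume "b \<in> B"
    show "\<exists>g. linear g \<and> (\<forall>y\<in>B. g y = (if y = b then 1 else (0::real)))"
      using linear_independent_extend[OF B(2), of "\<lambda>y. if y = b then 1 else (0::real)"] by blast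
  qed
  from bchoice[OF this] obtain cf where cf: "\<forall>b\<in>B. linear (cf b) \<and> (\<forall>y\<in>B. cf b y = (if y = b then 1 else (0::real)))"
    by (elim exE)
  have lin: "linear (cf b)" if "b \<in> B" for b using cf that by simp
  have expand: "v = (\<Sum>b\<in>B. cf b v *\<^sub>R b)" if v: "v \<in> span B" for v
  proof -
    obtain u where u: "v = (\<Sum>b\<in>B. u b *\<^sub>R b)" using v span_finite[OF finB] by blast
    have "cf i v = u i" if i: "i \<in> B" for i
    proof -
      have "cf i v = (\<Sum>b\<in>B. u b * cf i b)" unfolding u
        using lin[OF i] by (simp add: linear_sum linear_scale)
      also have "\<dots> = (\<Sum>b\<in>B. if b = i then u b else 0)"
        using cf i by (intro sum.cong) auto
      also have "\<dots> = u i" using finB i by simp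
      finally show ?thesis .
    qed
    then have "(\<Sum>b\<in>B. cf b v *\<^sub>R b) = (\<Sum>b\<in>B. u b *\<^sub>R b)" by (intro sum.cong) auto
    then show ?thesis using u by simp
  qed
  define code where "code r = (if 0 < r then 0 else if r < 0 then 1 else (2::nat))" for r :: real
  define \<phi> where "\<phi> i j a b c = code (orient (cf i) (cf j) (x a) (x b) (x c))" for i j a b c
  define \<Phi> where "\<Phi> = (\<lambda>(i,j). \<phi> i j) ` (B \<times> B)"
  have "finite \<Phi>" unfolding \<Phi>_def using finB by simp
  moreover have "\<forall>\<psi>\<in>\<Phi>. \<forall>a b c. \<psi> a b c < 3" unfolding \<Phi>_def \<phi>_def code_def by auto
  ultimately obtain T where T: "infinite T"
    "\<forall>\<psi>\<in>\<Phi>. \<exists>t. \<forall>a\<in>T. \<forall>b\<in>T. \<forall>c\<in>T. a < b \<longrightarrow> b < c \<longrightarrow> \<psi> a b c = t"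
    using ramsey_fin[of \<Phi> 3 UNIV] by auto
  define allo where "allo f g P = (\<forall>a\<in>T. \<forall>b\<in>T. \<forall>c\<in>T. a < b \<longrightarrow> b < c \<longrightarrow> P (orient f g (x a) (x b) (x c)))"
    for f g and P :: "real \<Rightarrow> bool"
  have three: "allo (cf i) (cf j) (\<lambda>r. 0 < r) \<or> allo (cf i) (cf j) (\<lambda>r. r < 0) \<or> allo (cf i) (cf j) (\<lambda>r. r = 0)"
    if ij: "i \<in> B" "j \<in> B" for i j
  proof -
    have "\<phi> i j \<in> \<Phi>" unfolding \<Phi>_def using ij by force
    have "\<exists>t. \<forall>a\<in>T. \<forall>b\<in>T. \<forall>c\<in>T. a < b \<longrightarrow> b < c \<longrightarrow> \<phi> i j a b c = t"
      using bspec[OF T(2) \<open>\<phi> i j \<in> \<Phi>\<close>] .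
    then obtain t where t: "\<forall>a\<in>T. \<forall>b\<in>T. \<forall>c\<in>T. a < b \<longrightarrow> b < c \<longrightarrow> \<phi> i j a b c = t"
      by (elim exE)
    have c0: "0 < r" if "code r = 0" for r using that unfolding code_def by (auto split: if_splits)
    have c1: "r < 0" if "code r = 1" for r using that unfolding code_def by (auto split: if_splits)
    have c2: "r = 0" if "code r \<noteq> 0" "code r \<noteq> 1" for r using that unfolding code_def by (auto split: if_splits)
    have tv: "code (orient (cf i) (cf j) (x a) (x b) (x c)) = t"
      if "a \<in> T" "b \<in> T" "c \<in> T" "a < b" "b < c" for a b c
      using t that unfolding \<phi>_def by simp
    consider "t = 0" | "t = 1" | "t \<noteq> 0 \<and> t \<noteq> 1" by linarith
    then show ?thesis
    proof cases
      case 1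
      have "allo (cf i) (cf j) (\<lambda>r. 0 < r)" unfolding allo_def
      proof (intro ballI impI)
        fix a b c assume "a \<in> T" "b \<in> T" "c \<in> T" "a < b" "b < c"
        then show "0 < orient (cf i) (cf j) (x a) (x b) (x c)" using tv 1 c0 by simp
      qed
      then show ?thesis by (rule disjI1)
    next
      case 2
      have "allo (cf i) (cf j) (\<lambda>r. r < 0)" unfolding allo_def
      proof (intro ballI impI)
        fix a b c assume "a \<in> T" "b \<in> T" "c \<in> T" "a < b" "b < c"
        then show "orient (cf i) (cf j) (x a) (x b) (x c) < 0" using tv 2 c1 by simp
      qed
      then show ?thesis by (intro disjI2 disjI1)
    next
      case 3
      have "allo (cf i) (cf j) (\<lambda>r. r = 0)" unfolding allo_def
      proof (intro ballI impI)
        fix a b c assume "a \<in> T" "b \<in> T" "c \<in> T" "a < b" "b < c"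
        then show "orient (cf i) (cf j) (x a) (x b) (x c) = 0" using tv 3 c2 by simp
      qed
      then show ?thesis by (intro disjI2)
    qed
  qed
  have injT: "inj_on x T" using inj by (simp add: inj_on_def)
  show ?thesis
  proof (cases "\<exists>i\<in>B. \<exists>j\<in>B. allo (cf i) (cf j) (\<lambda>r. 0 < r)")
    case True
    then obtain i j where ij: "i \<in> B" "j \<in> B" "allo (cf i) (cf j) (\<lambda>r. 0 < r)" by blast
    have pos: "\<forall>a\<in>T. \<forall>b\<in>T. \<forall>c\<in>T. a < b \<longrightarrow> b < c \<longrightarrow> 0 < orient (cf i) (cf j) (x a) (x b) (x c)"
      using ij(3) unfolding allo_def .
    from planar[OF lin[OF ij(1)] lin[OF ij(2)] injT T(1) pos]
    obtain Y where Y: "Y \<subseteq> x ` T" "infinite Y" "convexly_independent Y" by (elim exE conjE)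
    show ?thesis
    proof (rule exI[of _ Y], intro conjI)
      show "Y \<subseteq> range x" using Y(1) by auto
    qed (use Y in auto)
  next
    case nopos: False
    show ?thesis
    proof (cases "\<exists>i\<in>B. \<exists>j\<in>B. allo (cf i) (cf j) (\<lambda>r. r < 0)")
      case True
      then obtain i j where ij: "i \<in> B" "j \<in> B" "allo (cf i) (cf j) (\<lambda>r. r < 0)" by blast
      have neg: "\<forall>a\<in>T. \<forall>b\<in>T. \<forall>c\<in>T. a < b \<longrightarrow> b < c \<longrightarrow> orient (cf i) (cf j) (x a) (x b) (x c) < 0"
        using ij(3) unfolding allo_def .
      have pos: "\<forall>a\<in>T. \<forall>b\<in>T. \<forall>c\<in>T. a < b \<longrightarrow> b < c \<longrightarrow> 0 < orient (cf j) (cf i) (x a) (x b) (x c)"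
      proof (intro ballI impI)
        fix a b c assume "a \<in> T" "b \<in> T" "c \<in> T" "a < b" "b < c"
        then have "orient (cf i) (cf j) (x a) (x b) (x c) < 0" using neg by simp
        moreover have "orient (cf j) (cf i) (x a) (x b) (x c) = - orient (cf i) (cf j) (x a) (x b) (x c)"
          by (rule orient_swap)
        ultimately show "0 < orient (cf j) (cf i) (x a) (x b) (x c)" by linarith
      qed
      from planar[OF lin[OF ij(2)] lin[OF ij(1)] injT T(1) pos]
      obtain Y where Y: "Y \<subseteq> x ` T" "infinite Y" "convexly_independent Y" by (elim exE conjE)
      show ?thesis
      proof (rule exI[of _ Y], intro conjI)
        show "Y \<subseteq> range x" using Y(1) by auto
      qed (use Y in auto)
    next
      case False
      then have zero: "allo (cf i) (cf j) (\<lambda>r. r = 0)" if "i \<in> B" "j \<in> B" for i j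
        using three[OF that] nopos that by blast
      obtain a where aT: "a \<in> T" using T(1) by (metis finite.emptyI ex_in_conv)
      obtain b where bT: "b \<in> T" and ab: "a < b" using T(1) unfolding infinite_nat_iff_unbounded by blast
      obtain c where cT: "c \<in> T" and bc: "b < c" using T(1) unfolding infinite_nat_iff_unbounded by blast
      define v where "v = x b - x a"
      define w where "w = x c - x a"
      have vB: "v \<in> span B" unfolding v_def using span_diff[OF zB[of b] zB[of a]] unfolding z_def by simp
      have wB: "w \<in> span B" unfolding w_def using span_diff[OF zB[of c] zB[of a]] unfolding z_def by simp
      have "v \<noteq> 0" unfolding v_def using inj ab by (auto simp: inj_eq)
      have "\<exists>i\<in>B. cf i v \<noteq> 0"
      proof (rule ccontr)
        assume "\<not> (\<exists>i\<in>B. cf i v \<noteq> 0)"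
        then have "(\<Sum>b\<in>B. cf b v *\<^sub>R b) = 0" by simp
        then show False using expand[OF vB] \<open>v \<noteq> 0\<close> by simp
      qed
      then obtain i where iB: "i \<in> B" and vi: "cf i v \<noteq> 0" by (elim bexE)
      define lam where "lam = cf i w / cf i v"
      have coord: "cf j w = lam * cf j v" if jB: "j \<in> B" for j
      proof -
        have "orient (cf i) (cf j) (x a) (x b) (x c) = 0"
          using zero[OF iB jB] aT bT cT ab bc unfolding allo_def by simp
        moreover have "cf i v = cf i (x b) - cf i (x a)" "cf i w = cf i (x c) - cf i (x a)"
          "cf j v = cf j (x b) - cf j (x a)" "cf j w = cf j (x c) - cf j (x a)"
          unfolding v_def w_def using lin[OF iB] lin[OF jB] by (simp_all add: linear_diff)
        ultimately have "cf i v * cf j w = cf i w * cf j v" unfolding orient_def by simp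
        then show ?thesis unfolding lam_def using vi by (simp add: field_simps)
      qed
      have "w = (\<Sum>j\<in>B. cf j w *\<^sub>R j)" by (rule expand[OF wB])
      also have "\<dots> = (\<Sum>j\<in>B. lam *\<^sub>R (cf j v *\<^sub>R j))" by (intro sum.cong) (auto simp: coord)
      also have "\<dots> = lam *\<^sub>R (\<Sum>j\<in>B. cf j v *\<^sub>R j)" by (simp add: scaleR_sum_right)
      also have "\<dots> = lam *\<^sub>R v" using expand[OF vB] by simp
      finally have "x c = x a + lam *\<^sub>R (x b - x a)" unfolding v_def w_def by (simp add: algebra_simps)
      then have "x c \<in> affine hull {x a, x b}" using aff2_param by blast
      then show ?thesis using nc ab bc by blast
    qed
  qed
qed

primrec sel :: "(nat \<Rightarrow> 'a::real_vector) \<Rightarrow> nat \<Rightarrow> nat" where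
  "sel z 0 = 0"
| "sel z (Suc n) = (LEAST m. z m \<notin> span (z ` {..<Suc (sel z n)}))"

lemma indep_seq:
  fixes w :: "nat \<Rightarrow> 'a::real_vector"
  assumes W: "\<And>n. w n \<notin> span (w ` {..<n})"
  shows "independent (range w)" "inj w"
proof -
  have ind: "independent (w ` {..<n})" for n
  proof (induction n)
    case 0 then show ?case by (simp add: independent_empty)
  next
    case (Suc n)
    have "w ` {..<Suc n} = insert (w n) (w ` {..<n})" by (simp add: lessThan_Suc)
    then show ?case using independent_insertI[OF W[of n] Suc.IH] by simp
  qed
  have "range w = \<Union>(range (\<lambda>n. w ` {..<n}))" by auto
  moreover have "independent (\<Union>(range (\<lambda>n. w ` {..<n})))"
  proof (rule independent_Union_directed)
    fix c d assume "c \<in> range (\<lambda>n. w ` {..<n})" "d \<in> range (\<lambda>n. w ` {..<n})"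
    then obtain m n where "c = w ` {..<m}" "d = w ` {..<n}" by blast
    then show "c \<subseteq> d \<or> d \<subseteq> c"
      by (cases "m \<le> n") (auto intro!: image_mono)
  next
    fix c assume "c \<in> range (\<lambda>n. w ` {..<n})"
    then obtain n where "c = w ` {..<n}" by blast
    then show "independent c" using ind by simp
  qed
  ultimately show "independent (range w)" by simp
  show "inj w"
  proof (rule injI)
    fix m n assume eq: "w m = w n"
    show "m = n"
    proof (rule ccontr)
      assume "m \<noteq> n"
      then consider "m < n" | "n < m" by linarith
      then show False
      proof cases
        case 1
        then have "w n \<in> span (w ` {..<n})" using eq by (metis imageI lessThan_iff span_base)
        then show False using W by blast
      next
        case 2
        then have "w m \<in> span (w ` {..<m})" using eq by (metis imageI lessThan_iff span_base)
        then show False using W by blast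
      qed
    qed
  qed
qed

lemma core_inf:
  fixes x :: "nat \<Rightarrow> 'a::real_vector"
  assumes inj: "inj x"
  and nfd: "\<forall>N. \<exists>m. x m - x 0 \<notin> span ((\<lambda>k. x k - x 0) ` {..<N})"
  shows "\<exists>Y \<subseteq> range x. infinite Y \<and> convexly_independent Y"
proof -
  define z where "z k = x k - x 0" for k
  define \<sigma> where "\<sigma> = sel z"
  have ex: "\<exists>m. z m \<notin> span (z ` {..<N})" for N using nfd unfolding z_def by blast
  have P1: "z (\<sigma> (Suc n)) \<notin> span (z ` {..<Suc (\<sigma> n)})" for n
    unfolding \<sigma>_def sel.simps by (rule LeastI_ex[OF ex])
  have P2: "\<sigma> n < \<sigma> (Suc n)" for n
  proof (rule ccontr)
    assume "\<not> \<sigma> n < \<sigma> (Suc n)"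
    then have "\<sigma> (Suc n) \<in> {..<Suc (\<sigma> n)}" by simp
    then have "z (\<sigma> (Suc n)) \<in> span (z ` {..<Suc (\<sigma> n)})" by (meson imageI span_base)
    then show False using P1 by blast
  qed
  have sm: "strict_mono \<sigma>" using P2 by (simp add: strict_mono_Suc_iff)
  define w where "w n = z (\<sigma> (Suc n))" for n
  have W: "w n \<notin> span (w ` {..<n})" for n
  proof
    assume a: "w n \<in> span (w ` {..<n})"
    have "w ` {..<n} \<subseteq> z ` {..<Suc (\<sigma> n)}"
    proof
      fix v assume "v \<in> w ` {..<n}"
      then obtain k where k: "k < n" "v = w k" by blast
      then have "\<sigma> (Suc k) \<le> \<sigma> n" using sm by (simp add: strict_mono_less_eq)
      then show "v \<in> z ` {..<Suc (\<sigma> n)}" unfolding k w_def by simp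
    qed
    then have "w n \<in> span (z ` {..<Suc (\<sigma> n)})" using a span_mono by blast
    then show False using P1 unfolding w_def by simp
  qed
  have indw: "independent (range w)" and injw: "inj w" using indep_seq[OF W] by auto
  obtain f where f: "linear f" "\<forall>v\<in>range w. f v = real (Suc (inv w v))"
    using linear_independent_extend[OF indw, of "\<lambda>v. real (Suc (inv w v))"] by auto
  obtain g where g: "linear g" "\<forall>v\<in>range w. g v = (real (Suc (inv w v)))^2"
    using linear_independent_extend[OF indw, of "\<lambda>v. (real (Suc (inv w v)))^2"] by auto
  have fw: "f (w n) = real (Suc n)" for n using f(2) injw by simp
  have gw: "g (w n) = (real (Suc n))^2" for n using g(2) injw by simp
  define p where "p n = x (\<sigma> n)" for n
  have s0: "\<sigma> 0 = 0" unfolding \<sigma>_def by simp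
  have p0: "p 0 = x 0" unfolding p_def using s0 by simp
  have pz: "p n - p 0 = z (\<sigma> n)" for n unfolding p_def z_def using s0 by simp
  have fp: "f (p n) = f (p 0) + real n" for n
  proof (cases n)
    case 0 then show ?thesis by simp
  next
    case (Suc k)
    have "f (p n) - f (p 0) = f (p n - p 0)" by (simp add: linear_diff[OF f(1)])
    also have "\<dots> = f (w k)" unfolding pz w_def Suc by simp
    finally have "f (p n) - f (p 0) = f (w k)" .
    then show ?thesis using fw Suc by simp
  qed
  have gp: "g (p n) = g (p 0) + (real n)^2" for n
  proof (cases n)
    case 0 then show ?thesis by simp
  next
    case (Suc k)
    have "g (p n) - g (p 0) = g (p n - p 0)" by (simp add: linear_diff[OF g(1)])
    also have "\<dots> = g (w k)" unfolding pz w_def Suc by simp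
    finally have "g (p n) - g (p 0) = g (w k)" .
    then show ?thesis using gw Suc by simp
  qed
  have pos: "\<forall>a\<in>UNIV. \<forall>b\<in>UNIV. \<forall>c\<in>UNIV. a < b \<longrightarrow> b < c \<longrightarrow> 0 < orient f g (p a) (p b) (p c)"
  proof (intro ballI impI)
    fix a b c :: nat assume ab: "a < b" and bc: "b < c"
    have "orient f g (p a) (p b) (p c) =
      (real b - real a) * ((real c)^2 - (real a)^2) - (real c - real a) * ((real b)^2 - (real a)^2)"
      unfolding orient_def fp[of a] fp[of b] fp[of c] gp[of a] gp[of b] gp[of c] by algebra
    also have "\<dots> = (real b - real a) * (real c - real a) * (real c - real b)"
      unfolding power2_eq_square by algebra
    also have "0 < \<dots>"
    proof -
      have "0 < real b - real a" "0 < real c - real a" "0 < real c - real b" using ab bc by simp_all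
      then show ?thesis by (intro mult_pos_pos)
    qed
    finally show "0 < orient f g (p a) (p b) (p c)" .
  qed
  have injp: "inj_on p UNIV"
  proof (rule inj_onI)
    fix m n assume "p m = p n"
    then have "\<sigma> m = \<sigma> n" unfolding p_def by (rule injD[OF inj])
    then show "m = n" using sm by (rule strict_mono_eq[THEN iffD1, rotated])
  qed
  from planar[OF f(1) g(1) injp infinite_UNIV_nat pos]
  obtain Y where Y: "Y \<subseteq> p ` UNIV" "infinite Y" "convexly_independent Y" by (elim exE conjE)
  show ?thesis
  proof (rule exI[of _ Y], intro conjI)
    show "Y \<subseteq> range x" using Y(1) unfolding p_def by auto
  qed (use Y in auto)
qed

lemma core:
  fixes x :: "nat \<Rightarrow> 'a::real_vector"
  assumes inj: "inj x" and nc: "\<forall>a b c. a < b \<longrightarrow> b < c \<longrightarrow> x c \<notin> affine hull {x a, x b}"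
  shows "\<exists>Y \<subseteq> range x. infinite Y \<and> convexly_independent Y"
proof (cases "\<exists>N. \<forall>m. x m - x 0 \<in> span ((\<lambda>k. x k - x 0) ` {..<N})")
  case True
  then obtain N where "\<forall>m. x m - x 0 \<in> span ((\<lambda>k. x k - x 0) ` {..<N})" by (elim exE)
  then show ?thesis by (rule core_fin[OF inj nc])
next
  case False
  then have "\<forall>N. \<exists>m. x m - x 0 \<notin> span ((\<lambda>k. x k - x 0) ` {..<N})" by simp
  then show ?thesis by (rule core_inf[OF inj])
qed

definition bad :: "'a::real_vector set \<Rightarrow> 'a set" where
  "bad F = (\<Union>p\<in>F. \<Union>q\<in>F. affine hull {p,q})"

lemma bad_cover:
  fixes F :: "'a::real_vector set"
  assumes nontriv: "\<exists>v::'a. v \<noteq> 0" and fin: "finite F"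
  shows "\<exists>\<L>. finite \<L> \<and> (\<forall>L\<in>\<L>. is_line L) \<and> bad F \<subseteq> \<Union>\<L>"
proof -
  obtain v :: 'a where v: "v \<noteq> 0" using nontriv by (elim exE)
  define ln where "ln pq = (if fst pq = snd pq then affine hull {fst pq, fst pq + v} else affine hull {fst pq, snd pq})" for pq
  define \<L> where "\<L> = ln ` (F \<times> F)"
  have "finite \<L>" using fin unfolding \<L>_def by simp
  moreover have "\<forall>L\<in>\<L>. is_line L"
  proof
    fix L assume "L \<in> \<L>"
    then obtain p q where L: "L = ln (p,q)" unfolding \<L>_def by auto
    show "is_line L"
    proof (cases "p = q")
      case True
      have "p \<noteq> p + v" using v by simp
      moreover have "L = affine hull {p, p + v}" unfolding L ln_def using True by simp
      ultimately show ?thesis unfolding is_line_def by blast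
    next
      case False
      moreover have "L = affine hull {p, q}" unfolding L ln_def using False by simp
      ultimately show ?thesis unfolding is_line_def by blast
    qed
  qed
  moreover have "bad F \<subseteq> \<Union>\<L>"
  proof
    fix y assume "y \<in> bad F"
    then obtain p q where pq: "p \<in> F" "q \<in> F" "y \<in> affine hull {p,q}" unfolding bad_def by blast
    have "affine hull {p,q} \<subseteq> ln (p,q)"
    proof (cases "p = q")
      case True
      have "{p,q} \<subseteq> {p, p + v}" using True by simp
      then show ?thesis unfolding ln_def using True by (simp add: hull_mono)
    next
      case False then show ?thesis unfolding ln_def by simp
    qed
    moreover have "ln (p,q) \<in> \<L>" unfolding \<L>_def using pq by blast
    ultimately show "y \<in> \<Union>\<L>" using pq(3) by blast
  qed
  ultimately show ?thesis by blast
qed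

fun sq :: "'a::real_vector set \<Rightarrow> nat \<Rightarrow> 'a list" where
  "sq X 0 = []"
| "sq X (Suc n) = sq X n @ [SOME y. y \<in> X \<and> y \<notin> bad (set (sq X n))]"

definition xs :: "'a::real_vector set \<Rightarrow> nat \<Rightarrow> 'a" where
  "xs X n = (SOME y. y \<in> X \<and> y \<notin> bad (set (sq X n)))"

lemma set_sq: "set (sq X n) = xs X ` {..<n}"
  by (induction n) (simp_all add: xs_def lessThan_Suc)

lemma xs_prop:
  assumes avoid: "\<And>F. finite F \<Longrightarrow> \<exists>y. y \<in> X \<and> y \<notin> bad F"
  shows "xs X n \<in> X \<and> xs X n \<notin> bad (xs X ` {..<n})"
proof -
  have "\<exists>y. y \<in> X \<and> y \<notin> bad (set (sq X n))" using avoid by simp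
  then have "xs X n \<in> X \<and> xs X n \<notin> bad (set (sq X n))" unfolding xs_def by (rule someI_ex)
  then show ?thesis by (simp add: set_sq)
qed

lemma no_lines_ci:
  fixes X :: "'a::real_vector set"
  assumes nontriv: "\<exists>v::'a. v \<noteq> 0" and nl: "\<not> (\<exists>\<L>. finite \<L> \<and> (\<forall>L\<in>\<L>. is_line L) \<and> X \<subseteq> \<Union>\<L>)"
  shows "\<exists>Y. Y \<subseteq> X \<and> infinite Y \<and> convexly_independent Y"
proof -
  have avoid: "\<exists>y. y \<in> X \<and> y \<notin> bad F" if finF: "finite F" for F
  proof (rule ccontr)
    assume "\<not> (\<exists>y. y \<in> X \<and> y \<notin> bad F)"
    then have XF: "X \<subseteq> bad F" by blast
    obtain \<L> where L: "finite \<L>" "\<forall>L\<in>\<L>. is_line L" "bad F \<subseteq> \<Union>\<L>"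
      using bad_cover[OF nontriv finF] by blast
    have "X \<subseteq> \<Union>\<L>" using XF L(3) by (rule subset_trans)
    then show False using nl L(1,2) by blast
  qed
  define x where "x = xs X"
  have xp: "x n \<in> X" "x n \<notin> bad (x ` {..<n})" for n
    using xs_prop[OF avoid] unfolding x_def by auto
  have inb: "affine hull {p,q} \<subseteq> bad F" if "p \<in> F" "q \<in> F" for p q F
    unfolding bad_def using that by blast
  have lt: "x a \<noteq> x c" if "a < c" for a c
  proof
    assume eq: "x a = x c"
    have "x a \<in> affine hull {x a, x a}" by (simp add: hull_inc)
    moreover have "affine hull {x a, x a} \<subseteq> bad (x ` {..<c})" using that by (intro inb) auto
    ultimately have "x a \<in> bad (x ` {..<c})" by (rule subsetD[rotated])
    then show False using xp(2)[of c] eq by simp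
  qed
  have inj: "inj x"
  proof (rule injI)
    fix m n assume e: "x m = x n"
    show "m = n"
    proof (cases m n rule: linorder_cases)
      case less then show ?thesis using lt[of m n] e by simp
    next
      case equal then show ?thesis .
    next
      case greater then show ?thesis using lt[of n m] e by simp
    qed
  qed
  have nc: "\<forall>a b c. a < b \<longrightarrow> b < c \<longrightarrow> x c \<notin> affine hull {x a, x b}"
  proof (intro allI impI)
    fix a b c :: nat assume "a < b" "b < c"
    then have "affine hull {x a, x b} \<subseteq> bad (x ` {..<c})" by (intro inb) auto
    then show "x c \<notin> affine hull {x a, x b}" using xp(2)[of c] by blast
  qed
  from core[OF inj nc] obtain Y where Y: "Y \<subseteq> range x" "infinite Y" "convexly_independent Y"
    by (elim exE conjE)
  have "Y \<subseteq> X" using Y(1) xp(1) by auto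
  then show ?thesis using Y(2,3) by blast
qed

theorem theorem5p2:
  fixes X :: "'a::real_vector set"
  assumes nontriv: "\<exists>v::'a. v \<noteq> 0"
  shows "((\<exists>\<L>. finite \<L> \<and> (\<forall>L\<in>\<L>. is_line L) \<and> X \<subseteq> \<Union>\<L>)
           \<longleftrightarrow> \<not> (\<exists>Y. Y \<subseteq> X \<and> infinite Y \<and> convexly_independent Y))
       \<and> (\<not> (\<exists>Y. Y \<subseteq> X \<and> infinite Y \<and> convexly_independent Y)
           \<longleftrightarrow> finite_order_dimension (Co X) (\<subseteq>))"
proof -
  have i_ii: "\<not> (\<exists>Y. Y \<subseteq> X \<and> infinite Y \<and> convexly_independent Y)"
    if i: "\<exists>\<L>. finite \<L> \<and> (\<forall>L\<in>\<L>. is_line L) \<and> X \<subseteq> \<Union>\<L>"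
  proof
    assume "\<exists>Y. Y \<subseteq> X \<and> infinite Y \<and> convexly_independent Y"
    then obtain Y where Y: "Y \<subseteq> X" "infinite Y" "convexly_independent Y" by blast
    obtain \<L> where L: "finite \<L>" "\<forall>L\<in>\<L>. is_line L" "X \<subseteq> \<Union>\<L>" using i by blast
    have "Y \<subseteq> \<Union>\<L>" using Y(1) L(3) by (rule subset_trans)
    then have "finite Y" using lines_ci_finite[OF L(1) L(2) _ Y(3)] by blast
    then show False using Y(2) by simp
  qed
  have ii_i: "\<exists>\<L>. finite \<L> \<and> (\<forall>L\<in>\<L>. is_line L) \<and> X \<subseteq> \<Union>\<L>"
    if ii: "\<not> (\<exists>Y. Y \<subseteq> X \<and> infinite Y \<and> convexly_independent Y)"
    using no_lines_ci[OF nontriv, of X] ii by blast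
  have i_iii: "finite_order_dimension (Co X) (\<subseteq>)"
    if i: "\<exists>\<L>. finite \<L> \<and> (\<forall>L\<in>\<L>. is_line L) \<and> X \<subseteq> \<Union>\<L>"
  proof -
    obtain \<L> where L: "finite \<L>" "\<forall>L\<in>\<L>. is_line L" "X \<subseteq> \<Union>\<L>" using i by blast
    show ?thesis by (rule lines_imp_fod[OF L])
  qed
  have iii_ii: "\<not> (\<exists>Y. Y \<subseteq> X \<and> infinite Y \<and> convexly_independent Y)"
    if iii: "finite_order_dimension (Co X) (\<subseteq>)"
  proof
    assume "\<exists>Y. Y \<subseteq> X \<and> infinite Y \<and> convexly_independent Y"
    then obtain Y where Y: "Y \<subseteq> X" "infinite Y" "convexly_independent Y" by blast
    have "finite Y" by (rule fod_imp_no_inf_ci[OF iii Y(1) Y(3)])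
    then show False using Y(2) by simp
  qed
  show ?thesis
  proof (intro conjI iffI)
    show "\<not> (\<exists>Y. Y \<subseteq> X \<and> infinite Y \<and> convexly_independent Y)"
      if "\<exists>\<L>. finite \<L> \<and> (\<forall>L\<in>\<L>. is_line L) \<and> X \<subseteq> \<Union>\<L>" using i_ii[OF that] .
    show "\<exists>\<L>. finite \<L> \<and> (\<forall>L\<in>\<L>. is_line L) \<and> X \<subseteq> \<Union>\<L>"
      if "\<not> (\<exists>Y. Y \<subseteq> X \<and> infinite Y \<and> convexly_independent Y)" using ii_i[OF that] .
    show "finite_order_dimension (Co X) (\<subseteq>)"
      if "\<not> (\<exists>Y. Y \<subseteq> X \<and> infinite Y \<and> convexly_independent Y)" using i_iii[OF ii_i[OF that]] .
    show "\<not> (\<exists>Y. Y \<subseteq> X \<and> infinite Y \<and> convexly_independent Y)"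
      if "finite_order_dimension (Co X) (\<subseteq>)" using iii_ii[OF that] .
  qed
qed

end
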